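(* For every bounded distributive bilattice $\mathbb{B}$ (resp. bounded commutative distributive bilattice with conflation) we have $\mathbb{B}\cong(\mathbb{B}^+)_+$, and for every HBL (resp. HCBL) $\mathbb{H}$ we have $\mathbb{H}\cong(\mathbb{H}_+)^+$.
   Context: A bilattice is $(B,\le_t,\le_k,\neg)$ with $(B,\le_t)$ (operations $\wedge,\vee$) and $(B,\le_k)$ (operations $\otimes,\oplus$) lattices and $\neg$ satisfying: $a\le_tb\Rightarrow\neg b\le_t\neg a$, $a\le_kb\Rightarrow\neg a\le_k\neg b$, $\neg\neg a=a$. It is distributive if $x\circ(y\bullet z)=(x\circ y)\bullet(x\circ z)$ for all $\circ,\bullet\in\{\wedge,\vee,\otimes,\oplus\}$; bounds are $\mathtt{f},\mathtt{t}$ ($\le_t$) and $\bot,\top$ ($\le_k$). A bilattice with conflation additionally has $-$ with $a\le_tb\Rightarrow -a\le_t-b$, $a\le_kb\Rightarrow -b\le_k-a$, $--a=a$; commutative means $\neg-x=-\neg x$. Isomorphisms of bilattices (with conflation) are bijections preserving all these operations. A heterogeneous bilattice (HBL) is a tuple $(\mathbb{L}_1,\mathbb{L}_2,\mathrm{n},\mathrm{p})$ where $\mathbb{L}_i=(L_i,\sqcap_i,\sqcup_i,0_i,1_i)$ are bounded distributive lattices and $\mathrm{n}:\mathbb{L}_1\to\mathbb{L}_2$, $\mathrm{p}:\mathbb{L}_2\to\mathbb{L}_1$ are mutually inverse lattice isomorphisms. An HCBL is defined in the same way with $\mathbb{L}_i$ De Morgan algebras (negations ${\sim}_i$) and $\mathrm{n},\mathrm{p}$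 mutually inverse De Morgan algebra isomorphisms. An isomorphism $(\mathbb{L}_1,\mathbb{L}_2,\mathrm{n},\mathrm{p})\cong(\mathbb{L}_1',\mathbb{L}_2',\mathrm{n}',\mathrm{p}')$ is a pair of algebra isomorphisms $f_i:\mathbb{L}_i\to\mathbb{L}_i'$ with $f_2\circ\mathrm{n}=\mathrm{n}'\circ f_1$ and $f_1\circ\mathrm{p}=\mathrm{p}'\circ f_2$. For a bounded distributive bilattice $\mathbb{B}$, $\mathbb{B}^+$ is the HBL $(\mathbb{L}_1,\mathbb{L}_2,\mathrm{Id},\mathrm{Id})$ with $\mathbb{L}_1=\mathbb{L}_2=(\mathrm{Reg}(\mathbb{B}),\otimes,\oplus,\bot,\top)$, where $\mathrm{Reg}(\mathbb{B})=\{a\in B:a=\neg a\}$ (for a commutative bilattice with conflation, each $\mathbb{L}_i$ is also equipped with ${\sim}_i=-$ restricted to $\mathrm{Reg}(\mathbb{B})$). For an HBL $\mathbb{H}$, $\mathbb{H}_+$ is $L_1\times L_2$ with $\langle a_1,a_2\rangle\otimes\langle b_1,b_2\rangle=\langle a_1\sqcap_1b_1,a_2\sqcap_2b_2\rangle$, $\oplus$ componentwise $\sqcup$, $\langle a_1,a_2\rangle\wedge\langle b_1,b_2\rangle=\langle a_1\sqcap_1b_1,a_2\sqcup_2b_2\rangle$, $\langle a_1,a_2\rangle\vee\langle b_1,b_2\rangle=\langle a_1\sqcup_1b_1,a_2\sqcap_2b_2\rangle$, $\neg\langle a_1,a_2\rangle=\langle\mathrm{p}(a_2),\mathrm{n}(a_1)\rangle$,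 $\mathtt{f}=\langle0_1,1_2\rangle$, $\mathtt{t}=\langle1_1,0_2\rangle$, $\bot=\langle0_1,0_2\rangle$, $\top=\langle1_1,1_2\rangle$; for an HCBL also $-\langle a_1,a_2\rangle=\langle\mathrm{p}({\sim}_2a_2),\mathrm{n}({\sim}_1a_1)\rangle$. *)

theory Defs
  imports Main
begin

definition lattice_ops :: "'a set \<Rightarrow> ('a \<Rightarrow> 'a \<Rightarrow> 'a) \<Rightarrow> ('a \<Rightarrow> 'a \<Rightarrow> 'a) \<Rightarrow> bool" where
  "lattice_ops A m j \<longleftrightarrow>
     (\<forall>x\<in>A. \<forall>y\<in>A. m x y \<in> A \<and> j x y \<in> A \<and> m x y = m y x \<and> j x y = j y x) \<and>
     (\<forall>x\<in>A. \<forall>y\<in>A. \<forall>z\<in>A. m x (m y z) = m (m x y) z \<and> j x (j y z) = j (j x y) z) \<and>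
     (\<forall>x\<in>A. \<forall>y\<in>A. m x (j x y) = x \<and> j x (m x y) = x)"

record 'a dlat =
  lcar :: "'a set"
  lmeet :: "'a \<Rightarrow> 'a \<Rightarrow> 'a"
  ljoin :: "'a \<Rightarrow> 'a \<Rightarrow> 'a"
  lzero :: 'a
  lone :: 'a

record 'a dmalg = "'a dlat" +
  lneg :: "'a \<Rightarrow> 'a"

definition bdlat :: "('a, 'm) dlat_scheme \<Rightarrow> bool" where
  "bdlat L \<longleftrightarrow> lattice_ops (lcar L) (lmeet L) (ljoin L) \<and>
     lzero L \<in> lcar L \<and> lone L \<in> lcar L \<and>
     (\<forall>x\<in>lcar L. lmeet L x (lzero L) = lzero L \<and> ljoin L x (lone L) = lone L) \<and>
     (\<forall>x\<in>lcar L. \<forall>y\<in>lcar L. \<forall>z\<in>lcar L.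
        lmeet L x (ljoin L y z) = ljoin L (lmeet L x y) (lmeet L x z) \<and>
        ljoin L x (lmeet L y z) = lmeet L (ljoin L x y) (ljoin L x z))"

definition dm_algebra :: "('a, 'm) dmalg_scheme \<Rightarrow> bool" where
  "dm_algebra L \<longleftrightarrow> bdlat L \<and>
     (\<forall>x\<in>lcar L. lneg L x \<in> lcar L \<and> lneg L (lneg L x) = x) \<and>
     (\<forall>x\<in>lcar L. \<forall>y\<in>lcar L. lneg L (ljoin L x y) = lmeet L (lneg L x) (lneg L y))"

definition blat_iso :: "('a \<Rightarrow> 'b) \<Rightarrow> ('a, 'm) dlat_scheme \<Rightarrow> ('b, 'n) dlat_scheme \<Rightarrow> bool" where
  "blat_iso f L L' \<longleftrightarrow> bij_betw f (lcar L) (lcar L') \<and>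
     (\<forall>x\<in>lcar L. \<forall>y\<in>lcar L. f (lmeet L x y) = lmeet L' (f x) (f y) \<and>
                               f (ljoin L x y) = ljoin L' (f x) (f y)) \<and>
     f (lzero L) = lzero L' \<and> f (lone L) = lone L'"

definition dm_iso :: "('a \<Rightarrow> 'b) \<Rightarrow> ('a, 'm) dmalg_scheme \<Rightarrow> ('b, 'n) dmalg_scheme \<Rightarrow> bool" where
  "dm_iso f L L' \<longleftrightarrow> blat_iso f L L' \<and> (\<forall>x\<in>lcar L. f (lneg L x) = lneg L' (f x))"

record ('b, 'c) hbl =
  hL1 :: "'b dlat"
  hL2 :: "'c dlat"
  hn :: "'b \<Rightarrow> 'c"
  hp :: "'c \<Rightarrow> 'b"

definition is_hbl :: "('b, 'c) hbl \<Rightarrow> bool" where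
  "is_hbl H \<longleftrightarrow> bdlat (hL1 H) \<and> bdlat (hL2 H) \<and>
     blat_iso (hn H) (hL1 H) (hL2 H) \<and> blat_iso (hp H) (hL2 H) (hL1 H) \<and>
     (\<forall>a\<in>lcar (hL1 H). hp H (hn H a) = a) \<and> (\<forall>b\<in>lcar (hL2 H). hn H (hp H b) = b)"

definition hbl_isomorphic :: "('b, 'c) hbl \<Rightarrow> ('d, 'e) hbl \<Rightarrow> bool" where
  "hbl_isomorphic H H' \<longleftrightarrow> (\<exists>f1 f2.
     blat_iso f1 (hL1 H) (hL1 H') \<and> blat_iso f2 (hL2 H) (hL2 H') \<and>
     (\<forall>a\<in>lcar (hL1 H). f2 (hn H a) = hn H' (f1 a)) \<and>
     (\<forall>b\<in>lcar (hL2 H). f1 (hp H b) = hp H' (f2 b)))"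

record ('b, 'c) hcbl =
  cL1 :: "'b dmalg"
  cL2 :: "'c dmalg"
  cn :: "'b \<Rightarrow> 'c"
  cp :: "'c \<Rightarrow> 'b"

definition is_hcbl :: "('b, 'c) hcbl \<Rightarrow> bool" where
  "is_hcbl H \<longleftrightarrow> dm_algebra (cL1 H) \<and> dm_algebra (cL2 H) \<and>
     dm_iso (cn H) (cL1 H) (cL2 H) \<and> dm_iso (cp H) (cL2 H) (cL1 H) \<and>
     (\<forall>a\<in>lcar (cL1 H). cp H (cn H a) = a) \<and> (\<forall>b\<in>lcar (cL2 H). cn H (cp H b) = b)"

definition hcbl_isomorphic :: "('b, 'c) hcbl \<Rightarrow> ('d, 'e) hcbl \<Rightarrow> bool" where
  "hcbl_isomorphic H H' \<longleftrightarrow> (\<exists>f1 f2.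
     dm_iso f1 (cL1 H) (cL1 H') \<and> dm_iso f2 (cL2 H) (cL2 H') \<and>
     (\<forall>a\<in>lcar (cL1 H). f2 (cn H a) = cn H' (f1 a)) \<and>
     (\<forall>b\<in>lcar (cL2 H). f1 (cp H b) = cp H' (f2 b)))"

record 'a bilat =
  bcar :: "'a set"
  tmeet :: "'a \<Rightarrow> 'a \<Rightarrow> 'a"
  tjoin :: "'a \<Rightarrow> 'a \<Rightarrow> 'a"
  kmeet :: "'a \<Rightarrow> 'a \<Rightarrow> 'a"
  kjoin :: "'a \<Rightarrow> 'a \<Rightarrow> 'a"
  bneg :: "'a \<Rightarrow> 'a"
  bff :: 'a
  btt :: 'a
  bbot :: 'a
  btop :: 'a

record 'a cbilat = "'a bilat" +
  bconf :: "'a \<Rightarrow> 'a"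

definition leq_t :: "('a, 'm) bilat_scheme \<Rightarrow> 'a \<Rightarrow> 'a \<Rightarrow> bool" where
  "leq_t B a b \<longleftrightarrow> tmeet B a b = a"

definition leq_k :: "('a, 'm) bilat_scheme \<Rightarrow> 'a \<Rightarrow> 'a \<Rightarrow> bool" where
  "leq_k B a b \<longleftrightarrow> kmeet B a b = a"

definition bilattice :: "('a, 'm) bilat_scheme \<Rightarrow> bool" where
  "bilattice B \<longleftrightarrow> lattice_ops (bcar B) (tmeet B) (tjoin B) \<and>
     lattice_ops (bcar B) (kmeet B) (kjoin B) \<and>
     (\<forall>a\<in>bcar B. bneg B a \<in> bcar B \<and> bneg B (bneg B a) = a) \<and>
     (\<forall>a\<in>bcar B. \<forall>b\<in>bcar B. leq_t B a b \<longrightarrow> leq_t B (bneg B b) (bneg B a)) \<and>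
     (\<forall>a\<in>bcar B. \<forall>b\<in>bcar B. leq_k B a b \<longrightarrow> leq_k B (bneg B a) (bneg B b))"

definition bounded_bilattice :: "('a, 'm) bilat_scheme \<Rightarrow> bool" where
  "bounded_bilattice B \<longleftrightarrow> bilattice B \<and>
     bff B \<in> bcar B \<and> btt B \<in> bcar B \<and> bbot B \<in> bcar B \<and> btop B \<in> bcar B \<and>
     (\<forall>a\<in>bcar B. leq_t B (bff B) a \<and> leq_t B a (btt B) \<and>
                  leq_k B (bbot B) a \<and> leq_k B a (btop B))"

definition distributive_bilattice :: "('a, 'm) bilat_scheme \<Rightarrow> bool" where
  "distributive_bilattice B \<longleftrightarrow> bilattice B \<and>
     (\<forall>c\<in>{tmeet B, tjoin B, kmeet B, kjoin B}. \<forall>d\<in>{tmeet B, tjoin B, kmeet B, kjoin B}.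
        \<forall>x\<in>bcar B. \<forall>y\<in>bcar B. \<forall>z\<in>bcar B. c x (d y z) = d (c x y) (c x z))"

definition conflation_bilattice :: "('a, 'm) cbilat_scheme \<Rightarrow> bool" where
  "conflation_bilattice B \<longleftrightarrow> bilattice B \<and>
     (\<forall>a\<in>bcar B. bconf B a \<in> bcar B \<and> bconf B (bconf B a) = a) \<and>
     (\<forall>a\<in>bcar B. \<forall>b\<in>bcar B. leq_t B a b \<longrightarrow> leq_t B (bconf B a) (bconf B b)) \<and>
     (\<forall>a\<in>bcar B. \<forall>b\<in>bcar B. leq_k B a b \<longrightarrow> leq_k B (bconf B b) (bconf B a))"

definition commutative_cbilattice :: "('a, 'm) cbilat_scheme \<Rightarrow> bool" where
  "commutative_cbilattice B \<longleftrightarrow> (\<forall>a\<in>bcar B. bneg B (bconf B a) = bconf B (bneg B a))"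

definition bilat_iso_map :: "('a \<Rightarrow> 'b) \<Rightarrow> ('a, 'm) bilat_scheme \<Rightarrow> ('b, 'n) bilat_scheme \<Rightarrow> bool" where
  "bilat_iso_map h B B' \<longleftrightarrow> bij_betw h (bcar B) (bcar B') \<and>
     (\<forall>a\<in>bcar B. \<forall>b\<in>bcar B.
        h (tmeet B a b) = tmeet B' (h a) (h b) \<and> h (tjoin B a b) = tjoin B' (h a) (h b) \<and>
        h (kmeet B a b) = kmeet B' (h a) (h b) \<and> h (kjoin B a b) = kjoin B' (h a) (h b)) \<and>
     (\<forall>a\<in>bcar B. h (bneg B a) = bneg B' (h a)) \<and>
     h (bff B) = bff B' \<and> h (btt B) = btt B' \<and> h (bbot B) = bbot B' \<and> h (btop B) = btop B'"

definition bilat_isomorphic :: "('a, 'm) bilat_scheme \<Rightarrow> ('b, 'n) bilat_scheme \<Rightarrow> bool" where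
  "bilat_isomorphic B B' \<longleftrightarrow> (\<exists>h. bilat_iso_map h B B')"

definition cbilat_isomorphic :: "('a, 'm) cbilat_scheme \<Rightarrow> ('b, 'n) cbilat_scheme \<Rightarrow> bool" where
  "cbilat_isomorphic B B' \<longleftrightarrow>
     (\<exists>h. bilat_iso_map h B B' \<and> (\<forall>a\<in>bcar B. h (bconf B a) = bconf B' (h a)))"

definition Reg :: "('a, 'm) bilat_scheme \<Rightarrow> 'a set" where
  "Reg B = {a \<in> bcar B. a = bneg B a}"

definition B_plus :: "('a, 'm) bilat_scheme \<Rightarrow> ('a, 'a) hbl" where
  "B_plus B = (let L = \<lparr>lcar = Reg B, lmeet = kmeet B, ljoin = kjoin B,
                       lzero = bbot B, lone = btop B\<rparr>
               in \<lparr>hL1 = L, hL2 = L, hn = id, hp = id\<rparr>)"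

definition Bc_plus :: "('a, 'm) cbilat_scheme \<Rightarrow> ('a, 'a) hcbl" where
  "Bc_plus B = (let L = \<lparr>lcar = Reg B, lmeet = kmeet B, ljoin = kjoin B,
                        lzero = bbot B, lone = btop B, lneg = bconf B\<rparr>
                in \<lparr>cL1 = L, cL2 = L, cn = id, cp = id\<rparr>)"

definition H_plus :: "('b, 'c) hbl \<Rightarrow> ('b \<times> 'c) bilat" where
  "H_plus H = \<lparr>bcar = lcar (hL1 H) \<times> lcar (hL2 H),
     tmeet = (\<lambda>x y. (lmeet (hL1 H) (fst x) (fst y), ljoin (hL2 H) (snd x) (snd y))),
     tjoin = (\<lambda>x y. (ljoin (hL1 H) (fst x) (fst y), lmeet (hL2 H) (snd x) (snd y))),
     kmeet = (\<lambda>x y. (lmeet (hL1 H) (fst x) (fst y), lmeet (hL2 H) (snd x) (snd y))),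
     kjoin = (\<lambda>x y. (ljoin (hL1 H) (fst x) (fst y), ljoin (hL2 H) (snd x) (snd y))),
     bneg = (\<lambda>x. (hp H (snd x), hn H (fst x))),
     bff = (lzero (hL1 H), lone (hL2 H)),
     btt = (lone (hL1 H), lzero (hL2 H)),
     bbot = (lzero (hL1 H), lzero (hL2 H)),
     btop = (lone (hL1 H), lone (hL2 H))\<rparr>"

definition Hc_plus :: "('b, 'c) hcbl \<Rightarrow> ('b \<times> 'c) cbilat" where
  "Hc_plus H = \<lparr>bcar = lcar (cL1 H) \<times> lcar (cL2 H),
     tmeet = (\<lambda>x y. (lmeet (cL1 H) (fst x) (fst y), ljoin (cL2 H) (snd x) (snd y))),
     tjoin = (\<lambda>x y. (ljoin (cL1 H) (fst x) (fst y), lmeet (cL2 H) (snd x) (snd y))),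
     kmeet = (\<lambda>x y. (lmeet (cL1 H) (fst x) (fst y), lmeet (cL2 H) (snd x) (snd y))),
     kjoin = (\<lambda>x y. (ljoin (cL1 H) (fst x) (fst y), ljoin (cL2 H) (snd x) (snd y))),
     bneg = (\<lambda>x. (cp H (snd x), cn H (fst x))),
     bff = (lzero (cL1 H), lone (cL2 H)),
     btt = (lone (cL1 H), lzero (cL2 H)),
     bbot = (lzero (cL1 H), lzero (cL2 H)),
     btop = (lone (cL1 H), lone (cL2 H)),
     bconf = (\<lambda>x. (cp H (lneg (cL2 H) (snd x)), cn H (lneg (cL1 H) (fst x))))\<rparr>"

end

theory Submission
  imports Defs
begin


locale lat = fixes A :: "'a set" and m :: "'a \<Rightarrow> 'a \<Rightarrow> 'a" and j
  assumes L: "lattice_ops A m j"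
begin
lemma mc: "x \<in> A \<Longrightarrow> y \<in> A \<Longrightarrow> m x y \<in> A" using L unfolding lattice_ops_def by blast
lemma jc: "x \<in> A \<Longrightarrow> y \<in> A \<Longrightarrow> j x y \<in> A" using L unfolding lattice_ops_def by blast
lemma mcomm: "x \<in> A \<Longrightarrow> y \<in> A \<Longrightarrow> m x y = m y x" using L unfolding lattice_ops_def by blast
lemma jcomm: "x \<in> A \<Longrightarrow> y \<in> A \<Longrightarrow> j x y = j y x" using L unfolding lattice_ops_def by blast
lemma massoc: "x \<in> A \<Longrightarrow> y \<in> A \<Longrightarrow> z \<in> A \<Longrightarrow> m x (m y z) = m (m x y) z" using L unfolding lattice_ops_def by blast
lemma jassoc: "x \<in> A \<Longrightarrow> y \<in> A \<Longrightarrow> z \<in> A \<Longrightarrow> j x (j y z) = j (j x y) z" using L unfolding lattice_ops_def by blast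
lemma mabs: "x \<in> A \<Longrightarrow> y \<in> A \<Longrightarrow> m x (j x y) = x" using L unfolding lattice_ops_def by blast
lemma jabs: "x \<in> A \<Longrightarrow> y \<in> A \<Longrightarrow> j x (m x y) = x" using L unfolding lattice_ops_def by blast
lemma midem: "x \<in> A \<Longrightarrow> m x x = x"
  by (metis jabs mabs mc)
lemma jidem: "x \<in> A \<Longrightarrow> j x x = x"
  by (metis jabs mabs jc)
lemma le_j: "x \<in> A \<Longrightarrow> y \<in> A \<Longrightarrow> m x y = x \<longleftrightarrow> j x y = y"
  by (metis jabs jcomm mabs mcomm)
lemma antisym: "x \<in> A \<Longrightarrow> y \<in> A \<Longrightarrow> m x y = x \<Longrightarrow> m y x = y \<Longrightarrow> x = y"
  by (metis mcomm)
lemma le_trans: "x \<in> A \<Longrightarrow> y \<in> A \<Longrightarrow> z \<in> A \<Longrightarrow> m x y = x \<Longrightarrow> m y z = y \<Longrightarrow> m x z = x"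
  by (metis massoc)
lemma glb: "x \<in> A \<Longrightarrow> y \<in> A \<Longrightarrow> z \<in> A \<Longrightarrow> m z x = z \<Longrightarrow> m z y = z \<Longrightarrow> m z (m x y) = z"
  by (metis massoc)
lemma lub: "x \<in> A \<Longrightarrow> y \<in> A \<Longrightarrow> z \<in> A \<Longrightarrow> m x z = x \<Longrightarrow> m y z = y \<Longrightarrow> m (j x y) z = j x y"
  by (metis jassoc jc le_j)
lemma m_le1: "x \<in> A \<Longrightarrow> y \<in> A \<Longrightarrow> m (m x y) x = m x y"
  by (metis massoc mcomm midem)
lemma m_le2: "x \<in> A \<Longrightarrow> y \<in> A \<Longrightarrow> m (m x y) y = m x y"
  by (metis massoc midem)
lemma j_ge1: "x \<in> A \<Longrightarrow> y \<in> A \<Longrightarrow> m x (j x y) = x" by (rule mabs)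
lemma j_ge2: "x \<in> A \<Longrightarrow> y \<in> A \<Longrightarrow> m y (j x y) = y"
  by (metis jcomm mabs)

lemma anti_hom:
  assumes ph: "\<And>x. x \<in> A \<Longrightarrow> \<phi> x \<in> A" "\<And>x. x \<in> A \<Longrightarrow> \<phi> (\<phi> x) = x"
  and an: "\<And>x y. x \<in> A \<Longrightarrow> y \<in> A \<Longrightarrow> m x y = x \<Longrightarrow> m (\<phi> y) (\<phi> x) = \<phi> y"
  and xy: "x \<in> A" "y \<in> A"
  shows "\<phi> (m x y) = j (\<phi> x) (\<phi> y)" "\<phi> (j x y) = m (\<phi> x) (\<phi> y)"
proof -
  have gen: "\<phi> (m a b) = j (\<phi> a) (\<phi> b)" if a: "a \<in> A" "b \<in> A" for a b
  proof -
    let ?a = "\<phi> (m a b)" and ?b = "j (\<phi> a) (\<phi> b)"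
    have mab: "m a b \<in> A" using a mc by auto
    have bA: "?b \<in> A" using a ph jc by auto
    have aA: "?a \<in> A" using mab ph by auto
    have 1: "m (\<phi> a) ?a = \<phi> a" using an[OF mab a(1)] m_le1[OF a] by simp
    have 2: "m (\<phi> b) ?a = \<phi> b" using an[OF mab a(2)] m_le2[OF a] by simp
    have ba: "m ?b ?a = ?b" using lub[OF ph(1)[OF a(1)] ph(1)[OF a(2)] aA 1 2] .
    have 3: "m (\<phi> ?b) a = \<phi> ?b" using an[OF ph(1)[OF a(1)] bA] j_ge1[OF ph(1)[OF a(1)] ph(1)[OF a(2)]] ph(2)[OF a(1)] by simp
    have 4: "m (\<phi> ?b) b = \<phi> ?b" using an[OF ph(1)[OF a(2)] bA] j_ge2[OF ph(1)[OF a(1)] ph(1)[OF a(2)]] ph(2)[OF a(2)] by simp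
    have 5: "m (\<phi> ?b) (m a b) = \<phi> ?b" using glb[OF a ph(1)[OF bA] 3 4] .
    have ab: "m ?a ?b = ?a" using an[OF ph(1)[OF bA] mab 5] ph(2)[OF bA] by simp
    show ?thesis using antisym[OF aA bA ab ba] .
  qed
  show "\<phi> (m x y) = j (\<phi> x) (\<phi> y)" using gen[OF xy] .
  have "\<phi> (j x y) = \<phi> (j (\<phi> (\<phi> x)) (\<phi> (\<phi> y)))" using ph(2) xy by simp
  also have "\<dots> = \<phi> (\<phi> (m (\<phi> x) (\<phi> y)))" using gen[OF ph(1)[OF xy(1)] ph(1)[OF xy(2)]] by simp
  also have "\<dots> = m (\<phi> x) (\<phi> y)" using ph xy mc by auto
  finally show "\<phi> (j x y) = m (\<phi> x) (\<phi> y)" .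
qed

lemma mono_hom:
  assumes ph: "\<And>x. x \<in> A \<Longrightarrow> \<phi> x \<in> A" "\<And>x. x \<in> A \<Longrightarrow> \<phi> (\<phi> x) = x"
  and mo: "\<And>x y. x \<in> A \<Longrightarrow> y \<in> A \<Longrightarrow> m x y = x \<Longrightarrow> m (\<phi> x) (\<phi> y) = \<phi> x"
  and xy: "x \<in> A" "y \<in> A"
  shows "\<phi> (m x y) = m (\<phi> x) (\<phi> y)" "\<phi> (j x y) = j (\<phi> x) (\<phi> y)"
proof -
  let ?a = "\<phi> (m x y)" and ?b = "m (\<phi> x) (\<phi> y)"
  have mab: "m x y \<in> A" using xy mc by auto
  have bA: "?b \<in> A" using xy ph mc by auto
  have aA: "?a \<in> A" using mab ph by auto
  have 1: "m ?a (\<phi> x) = ?a" using mo[OF mab xy(1)] m_le1[OF xy] by simp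
  have 2: "m ?a (\<phi> y) = ?a" using mo[OF mab xy(2)] m_le2[OF xy] by simp
  have ab: "m ?a ?b = ?a" using glb[OF ph(1)[OF xy(1)] ph(1)[OF xy(2)] aA 1 2] .
  have 3: "m (\<phi> ?b) x = \<phi> ?b" using mo[OF bA ph(1)[OF xy(1)]] m_le1[OF ph(1)[OF xy(1)] ph(1)[OF xy(2)]] ph(2)[OF xy(1)] by simp
  have 4: "m (\<phi> ?b) y = \<phi> ?b" using mo[OF bA ph(1)[OF xy(2)]] m_le2[OF ph(1)[OF xy(1)] ph(1)[OF xy(2)]] ph(2)[OF xy(2)] by simp
  have 5: "m (\<phi> ?b) (m x y) = \<phi> ?b" using glb[OF xy ph(1)[OF bA] 3 4] .
  have ba: "m ?b ?a = ?b" using mo[OF ph(1)[OF bA] mab 5] ph(2)[OF bA] by simp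
  show "\<phi> (m x y) = m (\<phi> x) (\<phi> y)" using antisym[OF aA bA ab ba] .
  let ?c = "\<phi> (j x y)" and ?d = "j (\<phi> x) (\<phi> y)"
  have jab: "j x y \<in> A" using xy jc by auto
  have dA: "?d \<in> A" using xy ph jc by auto
  have cA: "?c \<in> A" using jab ph by auto
  have 6: "m (\<phi> x) ?c = \<phi> x" using mo[OF xy(1) jab] j_ge1[OF xy] by simp
  have 7: "m (\<phi> y) ?c = \<phi> y" using mo[OF xy(2) jab] j_ge2[OF xy] by simp
  have dc: "m ?d ?c = ?d" using lub[OF ph(1)[OF xy(1)] ph(1)[OF xy(2)] cA 6 7] .
  have 8: "m x (\<phi> ?d) = x" using mo[OF ph(1)[OF xy(1)] dA] j_ge1[OF ph(1)[OF xy(1)] ph(1)[OF xy(2)]] ph(2)[OF xy(1)] by simp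
  have 9: "m y (\<phi> ?d) = y" using mo[OF ph(1)[OF xy(2)] dA] j_ge2[OF ph(1)[OF xy(1)] ph(1)[OF xy(2)]] ph(2)[OF xy(2)] by simp
  have 10: "m (j x y) (\<phi> ?d) = j x y" using lub[OF xy ph(1)[OF dA] 8 9] .
  have cd: "m ?c ?d = ?c" using mo[OF jab ph(1)[OF dA] 10] ph(2)[OF dA] by simp
  show "\<phi> (j x y) = j (\<phi> x) (\<phi> y)" using antisym[OF cA dA cd dc] .
qed
end


locale dbl =
  fixes B :: "('a, 'm) bilat_scheme"
  assumes bb: "bounded_bilattice B" and db: "distributive_bilattice B"
begin

abbreviation C where "C \<equiv> bcar B"
abbreviation tm (infixl "\<sqinter>" 70) where "x \<sqinter> y \<equiv> tmeet B x y"
abbreviation tj (infixl "\<squnion>" 65) where "x \<squnion> y \<equiv> tjoin B x y"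
abbreviation km (infixl "\<otimes>" 70) where "x \<otimes> y \<equiv> kmeet B x y"
abbreviation kj (infixl "\<oplus>" 65) where "x \<oplus> y \<equiv> kjoin B x y"
abbreviation ng ("\<sim>_" [80] 80) where "\<sim>x \<equiv> bneg B x"
abbreviation F where "F \<equiv> bff B"
abbreviation T where "T \<equiv> btt B"
abbreviation Bo where "Bo \<equiv> bbot B"
abbreviation To where "To \<equiv> btop B"

lemma bil: "bilattice B" using bb unfolding bounded_bilattice_def by blast

sublocale t: lat "bcar B" "tmeet B" "tjoin B"
  using bil unfolding bilattice_def lat_def by blast
sublocale k: lat "bcar B" "kmeet B" "kjoin B"
  using bil unfolding bilattice_def lat_def by blast

lemma ngc[simp]: "x \<in> C \<Longrightarrow> \<sim>x \<in> C" using bil unfolding bilattice_def by blast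
lemma ngng[simp]: "x \<in> C \<Longrightarrow> \<sim>\<sim>x = x" using bil unfolding bilattice_def by blast
lemma ng_anti: "x \<in> C \<Longrightarrow> y \<in> C \<Longrightarrow> x \<sqinter> y = x \<Longrightarrow> (\<sim>y) \<sqinter> (\<sim>x) = \<sim>y"
  using bil unfolding bilattice_def leq_t_def by blast
lemma ng_mono: "x \<in> C \<Longrightarrow> y \<in> C \<Longrightarrow> x \<otimes> y = x \<Longrightarrow> (\<sim>x) \<otimes> (\<sim>y) = \<sim>x"
  using bil unfolding bilattice_def leq_k_def by blast

lemma cl[simp]: "x \<in> C \<Longrightarrow> y \<in> C \<Longrightarrow> x \<sqinter> y \<in> C" "x \<in> C \<Longrightarrow> y \<in> C \<Longrightarrow> x \<squnion> y \<in> C"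
  "x \<in> C \<Longrightarrow> y \<in> C \<Longrightarrow> x \<otimes> y \<in> C" "x \<in> C \<Longrightarrow> y \<in> C \<Longrightarrow> x \<oplus> y \<in> C"
  by (auto simp: t.mc t.jc k.mc k.jc)

lemma bnds[simp]: "F \<in> C" "T \<in> C" "Bo \<in> C" "To \<in> C"
  using bb unfolding bounded_bilattice_def by auto
lemma bnd_le: "x \<in> C \<Longrightarrow> F \<sqinter> x = F" "x \<in> C \<Longrightarrow> x \<sqinter> T = x" "x \<in> C \<Longrightarrow> Bo \<otimes> x = Bo" "x \<in> C \<Longrightarrow> x \<otimes> To = x"
  using bb unfolding bounded_bilattice_def leq_t_def leq_k_def by auto

lemma dist:
  assumes "c \<in> {tmeet B, tjoin B, kmeet B, kjoin B}" "d \<in> {tmeet B, tjoin B, kmeet B, kjoin B}"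
    "x \<in> C" "y \<in> C" "z \<in> C"
  shows "c x (d y z) = d (c x y) (c x z)"
  using db assms unfolding distributive_bilattice_def by blast

lemmas d_tm_tj = dist[of "tmeet B" "tjoin B", simplified]
lemmas d_tm_km = dist[of "tmeet B" "kmeet B", simplified]
lemmas d_tm_kj = dist[of "tmeet B" "kjoin B", simplified]
lemmas d_tj_tm = dist[of "tjoin B" "tmeet B", simplified]
lemmas d_tj_km = dist[of "tjoin B" "kmeet B", simplified]
lemmas d_tj_kj = dist[of "tjoin B" "kjoin B", simplified]
lemmas d_km_tm = dist[of "kmeet B" "tmeet B", simplified]
lemmas d_km_tj = dist[of "kmeet B" "tjoin B", simplified]
lemmas d_km_kj = dist[of "kmeet B" "kjoin B", simplified]
lemmas d_kj_tm = dist[of "kjoin B" "tmeet B", simplified]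
lemmas d_kj_tj = dist[of "kjoin B" "tjoin B", simplified]
lemmas d_kj_km = dist[of "kjoin B" "kmeet B", simplified]
lemmas d_tj_tj = dist[of "tjoin B" "tjoin B", simplified]

lemma ng_tm: "x \<in> C \<Longrightarrow> y \<in> C \<Longrightarrow> \<sim>(x \<sqinter> y) = (\<sim>x) \<squnion> (\<sim>y)"
  using t.anti_hom[of "bneg B"] ng_anti by auto
lemma ng_tj: "x \<in> C \<Longrightarrow> y \<in> C \<Longrightarrow> \<sim>(x \<squnion> y) = (\<sim>x) \<sqinter> (\<sim>y)"
  using t.anti_hom[of "bneg B"] ng_anti by auto
lemma ng_km: "x \<in> C \<Longrightarrow> y \<in> C \<Longrightarrow> \<sim>(x \<otimes> y) = (\<sim>x) \<otimes> (\<sim>y)"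
  using k.mono_hom[of "bneg B"] ng_mono by auto
lemma ng_kj: "x \<in> C \<Longrightarrow> y \<in> C \<Longrightarrow> \<sim>(x \<oplus> y) = (\<sim>x) \<oplus> (\<sim>y)"
  using k.mono_hom[of "bneg B"] ng_mono by auto

lemma bnd_j: "x \<in> C \<Longrightarrow> F \<squnion> x = x" "x \<in> C \<Longrightarrow> x \<squnion> T = T" "x \<in> C \<Longrightarrow> Bo \<oplus> x = x" "x \<in> C \<Longrightarrow> x \<oplus> To = To"
  using bnd_le t.le_j k.le_j by auto
lemma bnd_c: "x \<in> C \<Longrightarrow> x \<sqinter> F = F" "x \<in> C \<Longrightarrow> T \<sqinter> x = x" "x \<in> C \<Longrightarrow> x \<otimes> Bo = Bo" "x \<in> C \<Longrightarrow> To \<otimes> x = x"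
  "x \<in> C \<Longrightarrow> x \<squnion> F = x" "x \<in> C \<Longrightarrow> T \<squnion> x = T" "x \<in> C \<Longrightarrow> x \<oplus> Bo = x" "x \<in> C \<Longrightarrow> To \<oplus> x = To"
  subgoal using bnd_le(1)[of x] t.mcomm[of x F] by simp
  subgoal using bnd_le(2)[of x] t.mcomm[of x T] by simp
  subgoal using bnd_le(3)[of x] k.mcomm[of x Bo] by simp
  subgoal using bnd_le(4)[of x] k.mcomm[of x To] by simp
  subgoal using bnd_j(1)[of x] t.jcomm[of x F] by simp
  subgoal using bnd_j(2)[of x] t.jcomm[of x T] by simp
  subgoal using bnd_j(3)[of x] k.jcomm[of x Bo] by simp
  subgoal using bnd_j(4)[of x] k.jcomm[of x To] by simp
  done

lemma ng_Bo[simp]: "\<sim>Bo = Bo"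
proof -
  have "Bo \<otimes> (\<sim>Bo) = Bo" using bnd_le by simp
  then have "(\<sim>Bo) \<otimes> Bo = \<sim>Bo" using ng_mono[of Bo "\<sim>Bo"] by simp
  then show ?thesis using bnd_le(3)[of "\<sim>Bo"] k.antisym[of "\<sim>Bo" Bo] by simp
qed
lemma ng_To[simp]: "\<sim>To = To"
proof -
  have "(\<sim>To) \<otimes> To = \<sim>To" using bnd_le by simp
  then have "To \<otimes> (\<sim>To) = To" using ng_mono[of "\<sim>To" To] by simp
  then show ?thesis using bnd_le(4)[of "\<sim>To"] k.antisym[of "\<sim>To" To] by simp
qed
lemma ng_F[simp]: "\<sim>F = T"
proof -
  have "F \<sqinter> (\<sim>T) = F" using bnd_le by simp
  then have "T \<sqinter> (\<sim>F) = T" using ng_anti[of F "\<sim>T"] by simp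
  then show ?thesis using bnd_le(2)[of "\<sim>F"] t.antisym[of "\<sim>F" T] by simp
qed
lemma ng_T[simp]: "\<sim>T = F" using ngng[of F] by simp

lemma TF: "T \<oplus> F = To"
proof -
  have 1: "To \<squnion> (T \<oplus> F) = To"
    using d_tj_kj[of To T F] bnd_c(6)[of To] bnd_j(2)[of To] bnd_c(5)[of To] bnd_j(4)[of T] by simp
  have 2: "To \<sqinter> (T \<oplus> F) = To"
    using d_tm_kj[of To T F] bnd_le(2)[of To] bnd_c(1)[of To] bnd_j(4)[of T] bnd_c(8)[of F] by simp
  have 3: "(T \<oplus> F) \<sqinter> To = T \<oplus> F" using 1 t.le_j[of "T \<oplus> F" To] t.jcomm[of To "T \<oplus> F"] by simp
  show ?thesis using t.antisym[of "T \<oplus> F" To] 2 3 by simp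
qed
lemma BoTo: "Bo \<squnion> To = T"
  using d_tj_kj[of Bo T F] TF bnd_c(7)[of T] bnd_j(2)[of Bo] bnd_c(5)[of Bo] bnd_j(3)[of T] by simp
lemma ToBo: "To \<sqinter> Bo = F"
  using ng_tj[of Bo To] BoTo t.mcomm[of Bo To] by simp

lemma km_tmono: "x \<in> C \<Longrightarrow> y \<in> C \<Longrightarrow> z \<in> C \<Longrightarrow> y \<sqinter> z = y \<Longrightarrow> (x \<otimes> y) \<sqinter> (x \<otimes> z) = x \<otimes> y"
  using d_km_tm[of x y z] by simp

lemma Q: "x \<in> C \<Longrightarrow> x \<otimes> T = x \<squnion> Bo"
  using d_km_tj[of x Bo To] BoTo bnd_c(3)[of x] bnd_le(4)[of x] t.jcomm[of x Bo] by simp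

lemma PP: "x \<in> C \<Longrightarrow> (x \<squnion> Bo) \<squnion> Bo = x \<squnion> Bo"
  using t.jassoc[of x Bo Bo] t.jidem[of Bo] by simp
lemma NN: "x \<in> C \<Longrightarrow> (x \<sqinter> Bo) \<sqinter> Bo = x \<sqinter> Bo"
  using t.massoc[of x Bo Bo] t.midem[of Bo] by simp
lemma NP: "x \<in> C \<Longrightarrow> (x \<sqinter> Bo) \<squnion> Bo = Bo"
  using t.jabs[of Bo x] t.mcomm[of x Bo] t.jcomm[of "x \<sqinter> Bo" Bo] by simp
lemma PN: "x \<in> C \<Longrightarrow> (x \<squnion> Bo) \<sqinter> Bo = Bo"
  using t.mabs[of Bo x] t.jcomm[of x Bo] t.mcomm[of "x \<squnion> Bo" Bo] by simp

lemma pos_km_le: assumes p: "p \<in> C" "p \<squnion> Bo = p" and q: "q \<in> C"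
  shows "(p \<otimes> q) \<sqinter> p = p \<otimes> q"
  using km_tmono[of p q T] bnd_le(2)[of q] Q[of p] p q by simp

lemma pos_tm_ge: assumes p: "p \<in> C" "p \<squnion> Bo = p" and q: "q \<in> C" "q \<squnion> Bo = q"
  shows "(p \<otimes> q) \<sqinter> (p \<sqinter> q) = p \<otimes> q"
proof -
  have 1: "(p \<otimes> q) \<sqinter> p = p \<otimes> q" using pos_km_le p q by simp
  have 2: "(p \<otimes> q) \<sqinter> q = p \<otimes> q" using pos_km_le[OF q p(1)] k.mcomm[of p q] p q by simp
  show ?thesis using t.glb[OF p(1) q(1) _ 1 2] p q by simp
qed

lemma pos_kj_ge: assumes p: "p \<in> C" and q: "q \<in> C" "q \<squnion> Bo = q"
  shows "p \<sqinter> (p \<oplus> q) = p"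
proof -
  have "p \<oplus> q = (p \<oplus> q) \<squnion> p" using d_kj_tj[of p q Bo] q p bnd_c(7)[of p] by simp
  then have "p \<squnion> (p \<oplus> q) = p \<oplus> q" using t.jcomm[of p "p \<oplus> q"] p q by simp
  then show ?thesis using t.le_j[of p "p \<oplus> q"] p q by simp
qed

lemma pos_tj_le: assumes p: "p \<in> C" "p \<squnion> Bo = p" and q: "q \<in> C" "q \<squnion> Bo = q"
  shows "(p \<squnion> q) \<sqinter> (p \<oplus> q) = p \<squnion> q"
proof -
  have 1: "p \<sqinter> (p \<oplus> q) = p" using pos_kj_ge p q by simp
  have 2: "q \<sqinter> (p \<oplus> q) = q" using pos_kj_ge[OF q(1) p] k.jcomm[of p q] p q by simp
  show ?thesis using t.lub[OF p(1) q(1) _ 1 2] p q by simp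
qed

lemma I1: assumes x: "x \<in> C" and y: "y \<in> C"
  shows "x \<sqinter> y = (x \<otimes> y) \<sqinter> (x \<oplus> y)"
proof -
  define m where "m = x \<sqinter> y"
  have mC: "m \<in> C" using m_def x y by simp
  have a: "(x \<otimes> y) \<sqinter> x = x \<otimes> m"
    using t.mcomm[of "x \<otimes> y" x] d_tm_km[of x x y] t.midem[of x] x y m_def by simp
  have b: "(x \<otimes> y) \<sqinter> y = m \<otimes> y"
    using t.mcomm[of "x \<otimes> y" y] d_tm_km[of y x y] t.midem[of y] t.mcomm[of y x] x y m_def by simp
  have c: "(x \<otimes> m) \<oplus> m = m"
    using k.jabs[of m x] k.mcomm[of m x] k.jcomm[of "x \<otimes> m" m] x mC by simp
  have d: "(x \<otimes> m) \<oplus> y = (y \<oplus> x) \<otimes> (y \<oplus> m)"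
    using k.jcomm[of "x \<otimes> m" y] d_kj_km[of y x m] x y mC by simp
  have e: "m \<otimes> ((y \<oplus> x) \<otimes> (y \<oplus> m)) = m \<otimes> (y \<oplus> x)"
  proof -
    have "m \<otimes> ((y \<oplus> x) \<otimes> (y \<oplus> m)) = (m \<otimes> (y \<oplus> m)) \<otimes> (y \<oplus> x)"
      using k.mcomm[of "y \<oplus> x" "y \<oplus> m"] k.massoc[of m "y \<oplus> m" "y \<oplus> x"] x y mC by simp
    also have "m \<otimes> (y \<oplus> m) = m" using k.mabs[of m y] k.jcomm[of y m] y mC by simp
    finally show ?thesis .
  qed
  have f: "m \<oplus> (x \<oplus> y) = x \<oplus> y"
  proof -
    have "(x \<oplus> y) \<oplus> m = ((x \<oplus> y) \<oplus> x) \<sqinter> ((x \<oplus> y) \<oplus> y)"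
      using d_kj_tm[of "x \<oplus> y" x y] m_def x y by simp
    also have "(x \<oplus> y) \<oplus> x = x \<oplus> y"
      using k.jcomm[of "x \<oplus> y" x] k.jassoc[of x x y] k.jidem[of x] x y by simp
    also have "(x \<oplus> y) \<oplus> y = x \<oplus> y"
      using k.jassoc[of x y y, symmetric] k.jidem[of y] x y by simp
    finally show ?thesis using t.midem[of "x \<oplus> y"] k.jcomm[of m "x \<oplus> y"] x y mC by simp
  qed
  have g: "m \<otimes> (x \<oplus> y) = m" using k.le_j[of m "x \<oplus> y"] f x y mC by simp
  have "(x \<otimes> y) \<sqinter> (x \<oplus> y) = (x \<otimes> m) \<oplus> (m \<otimes> y)"
    using d_tm_kj[of "x \<otimes> y" x y] a b x y by simp
  also have "\<dots> = m \<otimes> (y \<oplus> x)"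
    using d_kj_km[of "x \<otimes> m" m y] c d e x y mC by simp
  also have "\<dots> = m" using g k.jcomm[of y x] x y by simp
  finally show ?thesis using m_def by simp
qed

lemma I1': assumes x: "x \<in> C" and y: "y \<in> C"
  shows "x \<squnion> y = (x \<otimes> y) \<squnion> (x \<oplus> y)"
proof -
  have "\<sim>(x \<squnion> y) = \<sim>((x \<otimes> y) \<squnion> (x \<oplus> y))"
    using ng_tj[of x y] I1[of "\<sim>x" "\<sim>y"] ng_km[of x y] ng_kj[of x y] ng_tj[of "x \<otimes> y" "x \<oplus> y"] x y by simp
  then show ?thesis using ngng[of "x \<squnion> y"] ngng[of "(x \<otimes> y) \<squnion> (x \<oplus> y)"] x y by (metis cl)
qed

lemma pos_tm: assumes p: "p \<in> C" "p \<squnion> Bo = p" and q: "q \<in> C" "q \<squnion> Bo = q"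
  shows "p \<sqinter> q = p \<otimes> q"
proof -
  have 1: "(p \<otimes> q) \<sqinter> (p \<sqinter> q) = p \<otimes> q" using pos_tm_ge p q by simp
  have 2: "(p \<sqinter> q) \<sqinter> (p \<squnion> q) = p \<sqinter> q"
    using t.le_trans[of "p \<sqinter> q" p "p \<squnion> q"] t.m_le1[of p q] t.j_ge1[of p q] p q by simp
  have 3: "(p \<squnion> q) \<sqinter> (p \<oplus> q) = p \<squnion> q" using pos_tj_le p q by simp
  have 4: "(p \<otimes> q) \<sqinter> (p \<oplus> q) = p \<otimes> q"
    using t.le_trans[OF _ _ _ 1 t.le_trans[OF _ _ _ 2 3]] p q by simp
  show ?thesis using I1[of p q] 4 p q by simp
qed

lemma pos_tj: assumes p: "p \<in> C" "p \<squnion> Bo = p" and q: "q \<in> C" "q \<squnion> Bo = q"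
  shows "p \<squnion> q = p \<oplus> q"
proof -
  have 1: "(p \<otimes> q) \<sqinter> (p \<sqinter> q) = p \<otimes> q" using pos_tm_ge p q by simp
  have 2: "(p \<sqinter> q) \<sqinter> (p \<squnion> q) = p \<sqinter> q"
    using t.le_trans[of "p \<sqinter> q" p "p \<squnion> q"] t.m_le1[of p q] t.j_ge1[of p q] p q by simp
  have 3: "(p \<squnion> q) \<sqinter> (p \<oplus> q) = p \<squnion> q" using pos_tj_le p q by simp
  have 4: "(p \<otimes> q) \<sqinter> (p \<oplus> q) = p \<otimes> q"
    using t.le_trans[OF _ _ _ 1 t.le_trans[OF _ _ _ 2 3]] p q by simp
  show ?thesis using I1'[of p q] 4 t.le_j[of "p \<otimes> q" "p \<oplus> q"] p q by simp
qed

lemma pos_neg: assumes p: "p \<in> C" "p \<squnion> Bo = p" and n: "n \<in> C" "n \<sqinter> Bo = n"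
  shows "p \<otimes> n = Bo"
proof -
  have 1: "Bo \<sqinter> p = Bo" using t.le_j[of Bo p] t.jcomm[of Bo p] p by simp
  have 2: "(n \<otimes> Bo) \<sqinter> (n \<otimes> p) = n \<otimes> Bo" using km_tmono[of n Bo p] 1 p n by simp
  have 3: "(p \<otimes> n) \<sqinter> (p \<otimes> Bo) = p \<otimes> n" using km_tmono[of p n Bo] p n by simp
  show ?thesis using t.antisym[of "p \<otimes> n" Bo] 2 3 bnd_c(3)[of n] bnd_c(3)[of p] k.mcomm[of n p] p n by simp
qed

lemma decomp: "x \<in> C \<Longrightarrow> (x \<squnion> Bo) \<oplus> (x \<sqinter> Bo) = x"
proof -
  assume x: "x \<in> C"
  have a: "(x \<squnion> Bo) \<oplus> x = x"
    using k.jcomm[of "x \<squnion> Bo" x] d_kj_tj[of x x Bo] k.jidem[of x] bnd_c(7)[of x] t.jidem[of x] x by simp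
  have b: "(x \<squnion> Bo) \<oplus> Bo = x \<squnion> Bo" using bnd_c(7)[of "x \<squnion> Bo"] x by simp
  show ?thesis using d_kj_tm[of "x \<squnion> Bo" x Bo] a b t.mabs[of x Bo] x by simp
qed

lemma P_km: "x \<in> C \<Longrightarrow> y \<in> C \<Longrightarrow> (x \<otimes> y) \<squnion> Bo = (x \<squnion> Bo) \<otimes> (y \<squnion> Bo)"
  using d_tj_km[of Bo x y] t.jcomm[of Bo] by simp
lemma P_kj: "x \<in> C \<Longrightarrow> y \<in> C \<Longrightarrow> (x \<oplus> y) \<squnion> Bo = (x \<squnion> Bo) \<oplus> (y \<squnion> Bo)"
  using d_tj_kj[of Bo x y] t.jcomm[of Bo] by simp
lemma P_tm: "x \<in> C \<Longrightarrow> y \<in> C \<Longrightarrow> (x \<sqinter> y) \<squnion> Bo = (x \<squnion> Bo) \<sqinter> (y \<squnion> Bo)"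
  using d_tj_tm[of Bo x y] t.jcomm[of Bo] by simp
lemma P_tj: "x \<in> C \<Longrightarrow> y \<in> C \<Longrightarrow> (x \<squnion> y) \<squnion> Bo = (x \<squnion> Bo) \<squnion> (y \<squnion> Bo)"
  using d_tj_tj[of Bo x y] t.jcomm[of Bo] by simp
lemma N_km: "x \<in> C \<Longrightarrow> y \<in> C \<Longrightarrow> (x \<otimes> y) \<sqinter> Bo = (x \<sqinter> Bo) \<otimes> (y \<sqinter> Bo)"
  using d_tm_km[of Bo x y] t.mcomm[of Bo] by simp
lemma N_kj: "x \<in> C \<Longrightarrow> y \<in> C \<Longrightarrow> (x \<oplus> y) \<sqinter> Bo = (x \<sqinter> Bo) \<oplus> (y \<sqinter> Bo)"
  using d_tm_kj[of Bo x y] t.mcomm[of Bo] by simp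

lemma Pdec: "x \<in> C \<Longrightarrow> y \<in> C \<Longrightarrow> ((x \<squnion> Bo) \<oplus> (y \<sqinter> Bo)) \<squnion> Bo = x \<squnion> Bo"
  using P_kj[of "x \<squnion> Bo" "y \<sqinter> Bo"] PP[of x] NP[of y] bnd_c(7)[of "x \<squnion> Bo"] by simp
lemma Ndec: "x \<in> C \<Longrightarrow> y \<in> C \<Longrightarrow> ((x \<squnion> Bo) \<oplus> (y \<sqinter> Bo)) \<sqinter> Bo = y \<sqinter> Bo"
  using N_kj[of "x \<squnion> Bo" "y \<sqinter> Bo"] NN[of y] PN[of x] bnd_j(3)[of "y \<sqinter> Bo"] by simp

definition u where "u x = (x \<squnion> Bo) \<oplus> ((\<sim>x) \<sqinter> Bo)"

lemma uC[simp]: "x \<in> C \<Longrightarrow> u x \<in> C" unfolding u_def by simp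
lemma ngN: "x \<in> C \<Longrightarrow> (\<sim>x) \<sqinter> Bo = \<sim>(x \<squnion> Bo)" using ng_tj[of x Bo] by simp
lemma u_cong: "x \<in> C \<Longrightarrow> y \<in> C \<Longrightarrow> x \<squnion> Bo = y \<squnion> Bo \<Longrightarrow> u x = u y"
  unfolding u_def using ngN[of x] ngN[of y] by simp
lemma u_reg: "x \<in> C \<Longrightarrow> \<sim>(u x) = u x"
  unfolding u_def using ng_kj[of "x \<squnion> Bo" "(\<sim>x) \<sqinter> Bo"] ngN[of x] k.jcomm[of "\<sim>(x \<squnion> Bo)" "x \<squnion> Bo"] by simp
lemma u_regular: "x \<in> C \<Longrightarrow> \<sim>x = x \<Longrightarrow> u x = x"
  unfolding u_def using decomp[of x] by simp
lemma u_g: assumes "x \<in> C" "y \<in> C" shows "u ((x \<squnion> Bo) \<oplus> (y \<sqinter> Bo)) = u x"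
  using u_cong[of "(x \<squnion> Bo) \<oplus> (y \<sqinter> Bo)" x] Pdec[of x y] assms by simp
lemma ng_g: assumes "x \<in> C" "y \<in> C" shows "\<sim>((x \<squnion> Bo) \<oplus> (y \<sqinter> Bo)) = ((\<sim>y) \<squnion> Bo) \<oplus> ((\<sim>x) \<sqinter> Bo)"
  using ng_kj[of "x \<squnion> Bo" "y \<sqinter> Bo"] ng_tj[of x Bo] ng_tm[of y Bo] k.jcomm[of "(\<sim>x) \<sqinter> Bo" "(\<sim>y) \<squnion> Bo"] assms by simp
lemma g_u: assumes "x \<in> C" shows "((u x) \<squnion> Bo) \<oplus> ((u (\<sim>x)) \<sqinter> Bo) = x"
  unfolding u_def using Pdec[of x "\<sim>x"] Ndec[of "\<sim>x" x] decomp[of x] assms by simp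

lemma u_km: assumes x: "x \<in> C" and y: "y \<in> C" shows "u (x \<otimes> y) = u x \<otimes> u y"
proof -
  define p where "p = x \<squnion> Bo"
  define q where "q = y \<squnion> Bo"
  define np where "np = (\<sim>x) \<sqinter> Bo"
  define nq where "nq = (\<sim>y) \<sqinter> Bo"
  have C: "p \<in> C" "q \<in> C" "np \<in> C" "nq \<in> C" using x y p_def q_def np_def nq_def by auto
  have pp: "p \<squnion> Bo = p" "q \<squnion> Bo = q" using PP x y p_def q_def by auto
  have nn: "np \<sqinter> Bo = np" "nq \<sqinter> Bo = nq" using NN x y np_def nq_def by auto
  have z1: "q \<otimes> np = Bo" using pos_neg[of q np] C pp nn by simp
  have z2: "p \<otimes> nq = Bo" using pos_neg[of p nq] C pp nn by simp
  have e1: "(p \<oplus> np) \<otimes> q = p \<otimes> q"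
    using k.mcomm[of "p \<oplus> np" q] d_km_kj[of q p np] z1 k.mcomm[of q p] bnd_c(7)[of "p \<otimes> q"] C by simp
  have e2: "(p \<oplus> np) \<otimes> nq = np \<otimes> nq"
    using k.mcomm[of "p \<oplus> np" nq] d_km_kj[of nq p np] z2 k.mcomm[of nq p] k.mcomm[of nq np] bnd_j(3)[of "np \<otimes> nq"] C by simp
  have "u x \<otimes> u y = (p \<oplus> np) \<otimes> (q \<oplus> nq)" unfolding u_def p_def q_def np_def nq_def by simp
  also have "\<dots> = (p \<otimes> q) \<oplus> (np \<otimes> nq)" using d_km_kj[of "p \<oplus> np" q nq] e1 e2 C by simp
  also have "\<dots> = u (x \<otimes> y)" unfolding u_def p_def q_def np_def nq_def
    using P_km[of x y] ng_km[of x y] N_km[of "\<sim>x" "\<sim>y"] x y by simp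
  finally show ?thesis by simp
qed

lemma kj_ac: "a \<in> C \<Longrightarrow> b \<in> C \<Longrightarrow> c \<in> C \<Longrightarrow> d \<in> C \<Longrightarrow> (a \<oplus> b) \<oplus> (c \<oplus> d) = (a \<oplus> c) \<oplus> (b \<oplus> d)"
  by (metis cl(4) k.jassoc k.jcomm)

lemma u_kj: assumes x: "x \<in> C" and y: "y \<in> C" shows "u (x \<oplus> y) = u x \<oplus> u y"
  unfolding u_def using P_kj[of x y] ng_kj[of x y] N_kj[of "\<sim>x" "\<sim>y"]
    kj_ac[of "x \<squnion> Bo" "(\<sim>x) \<sqinter> Bo" "y \<squnion> Bo" "(\<sim>y) \<sqinter> Bo"] x y by simp

lemma u_tm: assumes x: "x \<in> C" and y: "y \<in> C" shows "u (x \<sqinter> y) = u x \<otimes> u y"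
proof -
  have "(x \<sqinter> y) \<squnion> Bo = (x \<otimes> y) \<squnion> Bo"
    using P_tm[of x y] P_km[of x y] pos_tm[of "x \<squnion> Bo" "y \<squnion> Bo"] PP x y by simp
  then show ?thesis using u_cong[of "x \<sqinter> y" "x \<otimes> y"] u_km x y by simp
qed
lemma u_tj: assumes x: "x \<in> C" and y: "y \<in> C" shows "u (x \<squnion> y) = u x \<oplus> u y"
proof -
  have "(x \<squnion> y) \<squnion> Bo = (x \<oplus> y) \<squnion> Bo"
    using P_tj[of x y] P_kj[of x y] pos_tj[of "x \<squnion> Bo" "y \<squnion> Bo"] PP x y by simp
  then show ?thesis using u_cong[of "x \<squnion> y" "x \<oplus> y"] u_kj x y by simp
qed

lemma u_F: "u F = Bo" unfolding u_def using bnd_c(2)[of Bo] bnd_j(1)[of Bo] bnd_c(5)[of Bo] t.midem[of Bo] k.jidem[of Bo] by simp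
lemma u_T: "u T = To" unfolding u_def using bnd_c(6)[of Bo] bnd_le(1)[of Bo] ToBo t.mcomm[of F Bo] TF
  by (simp add: bnd_c(1))
lemma u_Bo: "u Bo = Bo" unfolding u_def using t.jidem[of Bo] t.midem[of Bo] k.jidem[of Bo] by simp
lemma u_To: "u To = To" using u_cong[of To T] BoTo t.jcomm[of Bo To] bnd_c(6)[of Bo] u_T by simp

lemma h_bij: "bij_betw (\<lambda>a. (u a, u (\<sim>a))) C (Reg B \<times> Reg B)"
proof (rule bij_betw_byWitness[where f'="\<lambda>(r,s). (r \<squnion> Bo) \<oplus> (s \<sqinter> Bo)"])
  show "\<forall>a\<in>C. (\<lambda>(r,s). (r \<squnion> Bo) \<oplus> (s \<sqinter> Bo)) (u a, u (\<sim>a)) = a" using g_u by simp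
  show "\<forall>a'\<in>Reg B \<times> Reg B. (\<lambda>a. (u a, u (\<sim>a))) ((\<lambda>(r,s). (r \<squnion> Bo) \<oplus> (s \<sqinter> Bo)) a') = a'"
  proof
    fix a' assume "a' \<in> Reg B \<times> Reg B"
    then obtain r s where a': "a' = (r,s)" "r \<in> C" "s \<in> C" "\<sim>r = r" "\<sim>s = s" unfolding Reg_def by auto
    show "(\<lambda>a. (u a, u (\<sim>a))) ((\<lambda>(r,s). (r \<squnion> Bo) \<oplus> (s \<sqinter> Bo)) a') = a'"
      using a' u_g[of r s] ng_g[of r s] u_g[of "\<sim>s" "\<sim>r"] u_regular[of r] u_regular[of s] by simp
  qed
  show "(\<lambda>a. (u a, u (\<sim>a))) ` C \<subseteq> Reg B \<times> Reg B" unfolding Reg_def using u_reg by auto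
  show "(\<lambda>(r,s). (r \<squnion> Bo) \<oplus> (s \<sqinter> Bo)) ` (Reg B \<times> Reg B) \<subseteq> C" unfolding Reg_def by auto
qed

lemma h_iso: "bilat_iso_map (\<lambda>a. (u a, u (\<sim>a))) B (H_plus (B_plus B))"
  unfolding bilat_iso_map_def
  apply (simp add: H_plus_def B_plus_def Let_def h_bij)
  using u_tm u_tj u_km u_kj ng_tm ng_tj ng_km ng_kj u_F u_T u_Bo u_To
  by simp

lemma F_neg: "y \<in> C \<Longrightarrow> F \<otimes> (y \<sqinter> Bo) = y \<sqinter> Bo"
proof -
  assume y: "y \<in> C"
  have "\<sim>(F \<otimes> (y \<sqinter> Bo)) = ((\<sim>y) \<squnion> Bo) \<otimes> T"
    using ng_km[of F "y \<sqinter> Bo"] ng_tm[of y Bo] k.mcomm[of T "(\<sim>y) \<squnion> Bo"] y by simp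
  also have "\<dots> = \<sim>(y \<sqinter> Bo)" using Q[of "(\<sim>y) \<squnion> Bo"] PP[of "\<sim>y"] ng_tm[of y Bo] y by simp
  finally have e: "\<sim>(F \<otimes> (y \<sqinter> Bo)) = \<sim>(y \<sqinter> Bo)" .
  have "F \<otimes> (y \<sqinter> Bo) = \<sim>\<sim>(F \<otimes> (y \<sqinter> Bo))" using y by simp
  also have "\<dots> = \<sim>\<sim>(y \<sqinter> Bo)" using e by simp
  also have "\<dots> = y \<sqinter> Bo" using y by simp
  finally show ?thesis .
qed

lemma J: assumes x: "x \<in> C" and y: "y \<in> C"
  shows "(x \<squnion> Bo) \<oplus> (y \<sqinter> Bo) = (x \<sqinter> To) \<otimes> (y \<squnion> To)"
proof -
  define R where "R = (x \<sqinter> To) \<otimes> (y \<squnion> To)"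
  have RC: "R \<in> C" using R_def x y by simp
  have a: "(x \<sqinter> To) \<squnion> Bo = x \<squnion> Bo"
    using P_tm[of x To] BoTo t.jcomm[of To Bo] bnd_le(2)[of "x \<squnion> Bo"] x by simp
  have b: "(y \<squnion> To) \<squnion> Bo = T"
    using t.jassoc[of y To Bo, symmetric] BoTo t.jcomm[of To Bo] bnd_j(2)[of y] y by simp
  have 1: "R \<squnion> Bo = x \<squnion> Bo"
    unfolding R_def using P_km[of "x \<sqinter> To" "y \<squnion> To"] a b Q[of "x \<squnion> Bo"] PP[of x] x y by simp
  have c: "(x \<sqinter> To) \<sqinter> Bo = F"
    using t.massoc[of x To Bo, symmetric] ToBo bnd_c(1)[of x] x by simp
  have d: "(y \<squnion> To) \<sqinter> Bo = y \<sqinter> Bo"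
    using t.mcomm[of "y \<squnion> To" Bo] d_tm_tj[of Bo y To] t.mcomm[of Bo y] t.mcomm[of Bo To] ToBo bnd_c(5)[of "y \<sqinter> Bo"] y by simp
  have 2: "R \<sqinter> Bo = y \<sqinter> Bo"
    unfolding R_def using N_km[of "x \<sqinter> To" "y \<squnion> To"] c d F_neg[of y] x y by simp
  show ?thesis using decomp[of R] 1 2 RC R_def by simp
qed

end

locale cdbl = dbl B for B :: "('a, 'm) cbilat_scheme" +
  assumes cf: "conflation_bilattice B" and cm: "commutative_cbilattice B"
begin
abbreviation cnf ("\<midarrow>_" [80] 80) where "\<midarrow>x \<equiv> bconf B x"

lemma cfc[simp]: "x \<in> C \<Longrightarrow> \<midarrow>x \<in> C" using cf unfolding conflation_bilattice_def by blast
lemma cfcf[simp]: "x \<in> C \<Longrightarrow> \<midarrow>\<midarrow>x = x" using cf unfolding conflation_bilattice_def by blast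
lemma cf_t: "x \<in> C \<Longrightarrow> y \<in> C \<Longrightarrow> x \<sqinter> y = x \<Longrightarrow> (\<midarrow>x) \<sqinter> (\<midarrow>y) = \<midarrow>x"
  using cf unfolding conflation_bilattice_def leq_t_def by blast
lemma cf_k: "x \<in> C \<Longrightarrow> y \<in> C \<Longrightarrow> x \<otimes> y = x \<Longrightarrow> (\<midarrow>y) \<otimes> (\<midarrow>x) = \<midarrow>y"
  using cf unfolding conflation_bilattice_def leq_k_def by blast
lemma cf_ng: "x \<in> C \<Longrightarrow> \<sim>(\<midarrow>x) = \<midarrow>(\<sim>x)" using cm unfolding commutative_cbilattice_def by blast

lemma cf_tj: "x \<in> C \<Longrightarrow> y \<in> C \<Longrightarrow> \<midarrow>(x \<squnion> y) = (\<midarrow>x) \<squnion> (\<midarrow>y)"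
  using t.mono_hom[of "bconf B"] cf_t by auto
lemma cf_tm: "x \<in> C \<Longrightarrow> y \<in> C \<Longrightarrow> \<midarrow>(x \<sqinter> y) = (\<midarrow>x) \<sqinter> (\<midarrow>y)"
  using t.mono_hom[of "bconf B"] cf_t by auto
lemma cf_km: "x \<in> C \<Longrightarrow> y \<in> C \<Longrightarrow> \<midarrow>(x \<otimes> y) = (\<midarrow>x) \<oplus> (\<midarrow>y)"
  using k.anti_hom[of "bconf B"] cf_k by auto

lemma cf_Bo: "\<midarrow>Bo = To"
proof -
  have "Bo \<otimes> (\<midarrow>To) = Bo" using bnd_le by simp
  then have "To \<otimes> (\<midarrow>Bo) = To" using cf_k[of Bo "\<midarrow>To"] by simp
  then show ?thesis using bnd_le(4)[of "\<midarrow>Bo"] k.antisym[of "\<midarrow>Bo" To] k.mcomm[of To "\<midarrow>Bo"] by simp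
qed
lemma cf_To: "\<midarrow>To = Bo" using cfcf[of Bo] cf_Bo by simp

lemma u_cf: assumes a: "a \<in> C" shows "u (\<midarrow>a) = \<midarrow>(u (\<sim>a))"
proof -
  have "u (\<midarrow>a) = (\<midarrow>(a \<squnion> To)) \<oplus> (\<midarrow>((\<sim>a) \<sqinter> To))"
    unfolding u_def using cf_tj[of a To] cf_tm[of "\<sim>a" To] cf_To cf_ng[of a] a by simp
  also have "\<dots> = \<midarrow>((a \<squnion> To) \<otimes> ((\<sim>a) \<sqinter> To))" using cf_km[of "a \<squnion> To" "(\<sim>a) \<sqinter> To"] a by simp
  also have "\<dots> = \<midarrow>(u (\<sim>a))"
    unfolding u_def using J[of "\<sim>a" a] k.mcomm[of "a \<squnion> To" "(\<sim>a) \<sqinter> To"] a by simp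
  finally show ?thesis .
qed

lemma hc_iso: "cbilat_isomorphic B (Hc_plus (Bc_plus B))"
  unfolding cbilat_isomorphic_def
proof (intro exI conjI)
  show "bilat_iso_map (\<lambda>a. (u a, u (\<sim>a))) B (Hc_plus (Bc_plus B))"
    unfolding bilat_iso_map_def
    apply (simp add: Hc_plus_def Bc_plus_def Let_def h_bij)
    using u_tm u_tj u_km u_kj ng_tm ng_tj ng_km ng_kj u_F u_T u_Bo u_To
    by simp
  show "\<forall>a\<in>C. (u (\<midarrow>a), u (\<sim>(\<midarrow>a))) = bconf (Hc_plus (Bc_plus B)) (u a, u (\<sim>a))"
    using u_cf cf_ng by (simp add: Hc_plus_def Bc_plus_def Let_def)
qed

end


lemma hbl_part:
  fixes H :: "('b,'c) hbl"
  assumes H: "is_hbl H"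
  shows "hbl_isomorphic H (B_plus (H_plus H))"
proof -
  let ?n = "hn H" and ?p = "hp H" and ?A = "lcar (hL1 H)" and ?B = "lcar (hL2 H)"
  have n: "blat_iso ?n (hL1 H) (hL2 H)" and p: "blat_iso ?p (hL2 H) (hL1 H)"
    and pn: "\<forall>a\<in>?A. ?p (?n a) = a" and np: "\<forall>b\<in>?B. ?n (?p b) = b"
    using H unfolding is_hbl_def by auto
  have nA: "\<And>a. a \<in> ?A \<Longrightarrow> ?n a \<in> ?B" using n unfolding blat_iso_def bij_betw_def by auto
  have pB: "\<And>b. b \<in> ?B \<Longrightarrow> ?p b \<in> ?A" using p unfolding blat_iso_def bij_betw_def by auto
  have Reg: "Reg (H_plus H) = {(a, ?n a) | a. a \<in> ?A}"
    unfolding Reg_def H_plus_def using pn np nA pB by force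
  show ?thesis unfolding hbl_isomorphic_def
  proof (intro exI conjI)
    show "blat_iso (\<lambda>a. (a, ?n a)) (hL1 H) (hL1 (B_plus (H_plus H)))"
      unfolding blat_iso_def
      apply (simp add: B_plus_def Let_def Reg)
      apply (intro conjI)
      subgoal by (rule bij_betw_byWitness[where f'=fst]) auto
      subgoal using n unfolding blat_iso_def by (simp add: H_plus_def)
      subgoal using n unfolding blat_iso_def by (simp add: H_plus_def)
      subgoal using n unfolding blat_iso_def by (simp add: H_plus_def)
      done
    show "blat_iso (\<lambda>b. (?p b, b)) (hL2 H) (hL2 (B_plus (H_plus H)))"
      unfolding blat_iso_def
      apply (simp add: B_plus_def Let_def Reg)
      apply (intro conjI)
      subgoal by (rule bij_betw_byWitness[where f'=snd]) (use pn np nA pB in force)+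
      subgoal using p unfolding blat_iso_def by (simp add: H_plus_def)
      subgoal using p unfolding blat_iso_def by (simp add: H_plus_def)
      subgoal using p unfolding blat_iso_def by (simp add: H_plus_def)
      done
    show "\<forall>a\<in>?A. (?p (?n a), ?n a) = hn (B_plus (H_plus H)) (a, ?n a)"
      using pn by (simp add: B_plus_def Let_def)
    show "\<forall>b\<in>?B. (?p b, ?n (?p b)) = hp (B_plus (H_plus H)) (?p b, b)"
      using np by (simp add: B_plus_def Let_def)
  qed
qed

lemma hcbl_part:
  fixes H :: "('b,'c) hcbl"
  assumes H: "is_hcbl H"
  shows "hcbl_isomorphic H (Bc_plus (Hc_plus H))"
proof -
  let ?n = "cn H" and ?p = "cp H" and ?A = "lcar (cL1 H)" and ?B = "lcar (cL2 H)"
  have n: "dm_iso ?n (cL1 H) (cL2 H)" and p: "dm_iso ?p (cL2 H) (cL1 H)"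
    and pn: "\<forall>a\<in>?A. ?p (?n a) = a" and np: "\<forall>b\<in>?B. ?n (?p b) = b"
    and d1: "dm_algebra (cL1 H)" and d2: "dm_algebra (cL2 H)"
    using H unfolding is_hcbl_def by auto
  have nA: "\<And>a. a \<in> ?A \<Longrightarrow> ?n a \<in> ?B" using n unfolding dm_iso_def blat_iso_def bij_betw_def by auto
  have pB: "\<And>b. b \<in> ?B \<Longrightarrow> ?p b \<in> ?A" using p unfolding dm_iso_def blat_iso_def bij_betw_def by auto
  have nneg: "\<And>a. a \<in> ?A \<Longrightarrow> ?n (lneg (cL1 H) a) = lneg (cL2 H) (?n a)" using n unfolding dm_iso_def by auto
  have pneg: "\<And>b. b \<in> ?B \<Longrightarrow> ?p (lneg (cL2 H) b) = lneg (cL1 H) (?p b)" using p unfolding dm_iso_def by auto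
  have negA: "\<And>a. a \<in> ?A \<Longrightarrow> lneg (cL1 H) a \<in> ?A" using d1 unfolding dm_algebra_def by auto
  have negB: "\<And>b. b \<in> ?B \<Longrightarrow> lneg (cL2 H) b \<in> ?B" using d2 unfolding dm_algebra_def by auto
  have Reg: "Reg (Hc_plus H) = {(a, ?n a) | a. a \<in> ?A}"
    unfolding Reg_def Hc_plus_def using pn np nA pB by force
  show ?thesis unfolding hcbl_isomorphic_def
  proof (intro exI conjI)
    show "dm_iso (\<lambda>a. (a, ?n a)) (cL1 H) (cL1 (Bc_plus (Hc_plus H)))"
      unfolding dm_iso_def blat_iso_def
      apply (simp add: Bc_plus_def Let_def Reg)
      apply (intro conjI)
      subgoal by (rule bij_betw_byWitness[where f'=fst]) auto
      subgoal using n unfolding dm_iso_def blat_iso_def by (simp add: Hc_plus_def)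
      subgoal using n unfolding dm_iso_def blat_iso_def by (simp add: Hc_plus_def)
      subgoal using n unfolding dm_iso_def blat_iso_def by (simp add: Hc_plus_def)
      subgoal using pneg nA pn nneg by (simp add: Hc_plus_def)
      done
    show "dm_iso (\<lambda>b. (?p b, b)) (cL2 H) (cL2 (Bc_plus (Hc_plus H)))"
      unfolding dm_iso_def blat_iso_def
      apply (simp add: Bc_plus_def Let_def Reg)
      apply (intro conjI)
      subgoal by (rule bij_betw_byWitness[where f'=snd]) (use pn np nA pB in force)+
      subgoal using p unfolding dm_iso_def blat_iso_def by (simp add: Hc_plus_def)
      subgoal using p unfolding dm_iso_def blat_iso_def by (simp add: Hc_plus_def)
      subgoal using p unfolding dm_iso_def blat_iso_def by (simp add: Hc_plus_def)
      subgoal using nneg pB np pneg by (simp add: Hc_plus_def)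
      done
    show "\<forall>a\<in>?A. (?p (?n a), ?n a) = cn (Bc_plus (Hc_plus H)) (a, ?n a)"
      using pn by (simp add: Bc_plus_def Let_def)
    show "\<forall>b\<in>?B. (?p b, ?n (?p b)) = cp (Bc_plus (Hc_plus H)) (?p b, b)"
      using np by (simp add: Bc_plus_def Let_def)
  qed
qed

theorem mainTheorem9:
  shows "(\<forall>B :: 'a bilat. bounded_bilattice B \<and> distributive_bilattice B \<longrightarrow>
            bilat_isomorphic B (H_plus (B_plus B))) \<and>
         (\<forall>B :: 'a cbilat. bounded_bilattice B \<and> distributive_bilattice B \<and>
            conflation_bilattice B \<and> commutative_cbilattice B \<longrightarrow>
            cbilat_isomorphic B (Hc_plus (Bc_plus B))) \<and>
         (\<forall>H :: ('b, 'c) hbl. is_hbl H \<longrightarrow> hbl_isomorphic H (B_plus (H_plus H))) \<and>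
         (\<forall>H :: ('b, 'c) hcbl. is_hcbl H \<longrightarrow> hcbl_isomorphic H (Bc_plus (Hc_plus H)))"
proof (intro conjI allI impI)
  fix B :: "'a bilat" assume "bounded_bilattice B \<and> distributive_bilattice B"
  then interpret dbl B by unfold_locales auto
  show "bilat_isomorphic B (H_plus (B_plus B))" unfolding bilat_isomorphic_def using h_iso by blast
next
  fix B :: "'a cbilat" assume a: "bounded_bilattice B \<and> distributive_bilattice B \<and>
            conflation_bilattice B \<and> commutative_cbilattice B"
  then interpret cdbl B by unfold_locales auto
  show "cbilat_isomorphic B (Hc_plus (Bc_plus B))" by (rule hc_iso)
next
  fix H :: "('b,'c) hbl" assume "is_hbl H" then show "hbl_isomorphic H (B_plus (H_plus H))" by (rule hbl_part)
next
  fix H :: "('b,'c) hcbl" assume "is_hcbl H" then show "hcbl_isomorphic H (Bc_plus (Hc_plus H))" by (rule hcbl_part)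
qed

end
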